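(* The Taylor coefficients of $\log\mathbb{E}[z^V]=\sum_{k\ge0}q_kz^k$ around $z=0$ are $$q_0=-\frac{\theta}{\gamma}\,{}_2F_1(1,\gamma;1+\gamma;q),\qquad q_k=\theta\,\frac{(k-1)!}{(\gamma+1)_k}\,{}_2F_1(k,\gamma;1+\gamma+k;q)\quad(k\ge1).$$ Hence $\mathbb{P}(V=0)=e^{q_0}$ and $\mathbb{P}(V=n)=\frac1n\sum_{k=0}^{n-1}(n-k)q_{n-k}\mathbb{P}(V=k)$ for $n\ge1$.
   Context: Fix $\delta>0$ and $\alpha>\beta\ge0$, put $\lambda=\alpha-\beta$, $q=\beta/\alpha$, $\gamma=\delta/\lambda$, and fix $\theta>0$. Let $\xi(z)=\frac{q-z}{1-z}$. Let $V$ be a random variable on $\{0,1,\dots\}$ with $\log\mathbb{E}[z^V]=-\frac{\theta}{\gamma}{}_2F_1(1,\gamma;1+\gamma;\xi(z))$ for $z\in[0,1)$, where ${}_2F_1$ is the Gauss hypergeometric function and $(a)_k=\Gamma(a+k)/\Gamma(a)$ is the Pochhammer symbol. *)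

theory Defs
  imports "HOL-Probability.Probability"
begin

definition hyp2F1_series :: "real \<Rightarrow> real \<Rightarrow> real \<Rightarrow> real \<Rightarrow> real" where
  "hyp2F1_series a b c x =
     (\<Sum>n. pochhammer a n * pochhammer b n / pochhammer c n * x ^ n / fact n)"

text \<open>Gauss hypergeometric function on the real interval (-inf, 1): the series for |x| < 1,
  and for x \<le> -1 its analytic continuation given by the Pfaff transformation
  2F1(a,b;c;x) = (1-x)^(-a) 2F1(a,c-b;c;x/(x-1)), where x/(x-1) lies in [1/2,1).
  (Not used for x \<ge> 1.)\<close>
definition hyp2F1 :: "real \<Rightarrow> real \<Rightarrow> real \<Rightarrow> real \<Rightarrow> real" where
  "hyp2F1 a b c x =
     (if \<bar>x\<bar> < 1 then hyp2F1_series a b c x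
      else if x \<le> -1 then (1 - x) powr (-a) * hyp2F1_series a (c - b) c (x / (x - 1))
      else 0)"

end

theory Submission
  imports Defs "HOL-Complex_Analysis.Complex_Analysis"
begin

definition aa :: "real \<Rightarrow> nat \<Rightarrow> nat \<Rightarrow> real" where
  "aa g k m = fact (k-1) / pochhammer (g+1) k *
     (pochhammer (real k) m * pochhammer g m / pochhammer (1+g+real k) m / fact m)"

lemma aa_pos: assumes "g > 0" "k \<ge> 1" shows "aa g k m > 0"
  using assms unfolding aa_def
  by (intro mult_pos_pos divide_pos_pos pochhammer_pos) auto

lemma aa_Suc_m: assumes "g > 0" "k \<ge> 1"
  shows "aa g k (Suc m) = aa g k m * ((real k+real m)*(g+real m)) / ((1+g+real k+real m)*(real m+1))"
proof -
  have p1: "pochhammer (1+g+real k) m > 0" using assms by (intro pochhammer_pos) auto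
  have p2: "pochhammer (g+1) k > 0" using assms by (intro pochhammer_pos) auto
  have e1: "pochhammer (real k) (Suc m) = pochhammer (real k) m * (real k + real m)" by (simp add: pochhammer_Suc)
  have e2: "pochhammer (1+g+real k) (Suc m) = pochhammer (1+g+real k) m * (1+g+real k+real m)" by (simp add: pochhammer_Suc)
  have e6: "pochhammer g (Suc m) = pochhammer g m * (g + real m)" by (simp add: pochhammer_Suc)
  have e7: "(fact (Suc m)::real) = fact m * (real m + 1)" by (simp add: fact_Suc)
  have gen: "\<And>A B C D E F. A > 0 \<Longrightarrow> B > 0 \<Longrightarrow> E > 0 \<Longrightarrow> 1+g+real k+real m > 0 \<Longrightarrow>
     F / B * (D * (real k + real m) * (C * (g + real m)) / (A * (1+g+real k+real m)) / (E * (real m + 1)))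
     = F / B * (D * C / A / E) * ((real k + real m) * (g + real m)) / ((1+g+real k+real m) * (real m + 1))"
    by (simp add: field_simps)
  have Epos: "(fact m :: real) > 0" by simp
  show ?thesis unfolding aa_def e1 e2 e6 e7
    using gen[OF p1 p2 Epos] assms by (simp add: add_ac)
qed

lemma aa_Suc_k: assumes "g > 0" "k \<ge> 1"
  shows "aa g (Suc k) m = aa g k (Suc m) * (real m+1) / (g+real m)"
proof -
  have e1: "pochhammer (real k) (Suc m) = real k * pochhammer (real (Suc k)) m"
    by (subst pochhammer_rec) (simp add: add_ac)
  have e2: "pochhammer (1+g+real k) (Suc m) = (1+g+real k) * pochhammer (1+g+real (Suc k)) m"
    by (subst pochhammer_rec) (simp add: add_ac)
  have e3: "pochhammer (g+1) (Suc k) = pochhammer (g+1) k * (1+g+real k)"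
    by (simp add: pochhammer_Suc add_ac)
  have e4: "fact k = real k * fact (k-1)"
    using assms by (simp add: fact_reduce)
  have e6: "pochhammer g (Suc m) = pochhammer g m * (g + real m)" by (simp add: pochhammer_Suc)
  have e7: "(fact (Suc m)::real) = fact m * (real m + 1)" by (simp add: fact_Suc)
  have p1: "pochhammer (1+g+real (Suc k)) m > 0" using assms by (intro pochhammer_pos) auto
  have p2: "pochhammer (g+1) k > 0" using assms by (intro pochhammer_pos) auto
  have p3: "pochhammer g m > 0" using assms by (intro pochhammer_pos) auto
  have sk: "Suc k - 1 = k" by simp
  have gen: "\<And>A B C D E F. A > 0 \<Longrightarrow> B > 0 \<Longrightarrow> C > 0 \<Longrightarrow> E > 0
     \<Longrightarrow> g + real m > 0 \<Longrightarrow> 1 + g + real k > 0 \<Longrightarrow>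
     (real k * F) / (B * (1+g+real k)) * (D * C / A / E)
     = F / B * (real k * D * (C * (g + real m)) / ((1+g+real k) * A) / (E * (real m + 1))) * (real m + 1) / (g + real m)"
  proof -
    fix A B C D E F :: real assume h: "A > 0" "B > 0" "C > 0" "E > 0" "g + real m > 0" "1 + g + real k > 0"
    have n: "A \<noteq> 0" "B \<noteq> 0" "C \<noteq> 0" "E \<noteq> 0" "g + real m \<noteq> 0" "1 + g + real k \<noteq> 0" "real m + 1 \<noteq> 0"
      using h by auto
    show "(real k * F) / (B * (1+g+real k)) * (D * C / A / E)
     = F / B * (real k * D * (C * (g + real m)) / ((1+g+real k) * A) / (E * (real m + 1))) * (real m + 1) / (g + real m)"
      using n by (simp add: divide_simps)
  qed
  have Epos: "(fact m :: real) > 0" by simp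
  show ?thesis unfolding aa_def sk e1 e2 e3 e4 e6 e7
    using gen[OF p1 p2 p3 Epos] assms by (simp add: add_ac)
qed

lemma poly_id:
  fixes K M g a :: real
  assumes "g + M > 0" "M + 1 > 0" "1 + g + K + M > 0"
  shows "(K+1)*(a*((K+M)*(g+M))/((1+g+K+M)*(M+1)))*(M+1)/(g+M) - (K-g)*a + (K-1)*(a*(g+M)/(M+1))
         - (K+g)*(a*((K+M)*(g+M))/((1+g+K+M)*(M+1))) = 0"
proof -
  have n: "g + M \<noteq> 0" "M + 1 \<noteq> 0" "1 + g + K + M \<noteq> 0" using assms by auto
  show ?thesis using n by (simp add: divide_simps) (simp add: algebra_simps)
qed

context
  fixes g q :: real
  assumes g: "g > 0" and q0: "q \<ge> 0" and q1: "q < 1"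
begin

lemma aa_0: "aa g k 0 = fact (k-1) / pochhammer (g+1) k"
  by (simp add: aa_def)

lemma aa_one: "aa g 1 m = g / ((g + m) * (g + m + 1))"
proof (induction m)
  case 0
  have "g + g*g > 0" using g by (simp add: add_pos_pos)
  then show ?case using g by (simp add: aa_0 field_simps)
next
  case (Suc m)
  have "aa g 1 (Suc m) = aa g 1 m * ((1+real m)*(g+real m)) / ((1+g+1+real m)*(real m+1))"
    using aa_Suc_m[OF g, of 1 m] by simp
  also have "\<dots> = g / ((g + Suc m) * (g + Suc m + 1))"
  proof -
    have n: "1+g+1+real m \<noteq> 0" "real m + 1 \<noteq> 0" "g + real m \<noteq> 0" "g + real m + 1 \<noteq> 0" "g + real (Suc m) \<noteq> 0" "g + real (Suc m) + 1 \<noteq> 0"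
      using g by auto
    show ?thesis unfolding Suc using n by (simp add: divide_simps) (simp add: algebra_simps)
  qed
  finally show ?case .
qed

lemma coef_id:
  assumes k: "k \<ge> 1"
  shows "(real k + 1)*aa g (Suc k) m - (real k - g)*aa g k m
         + (real k - 1)*aa g (k-1) (Suc m) - (real k + g)*aa g k (Suc m) = 0"
proof -
  define a where "a = aa g k m"
  have A: "aa g k (Suc m) = a * ((real k+real m)*(g+real m)) / ((1+g+real k+real m)*(real m+1))"
    unfolding a_def by (rule aa_Suc_m[OF g k])
  have B: "aa g (Suc k) m = a * ((real k+real m)*(g+real m)) / ((1+g+real k+real m)*(real m+1)) * (real m+1) / (g+real m)"
    using aa_Suc_k[OF g k, of m] unfolding A by simp
  have C: "(real k - 1)*aa g (k-1) (Suc m) = (real k - 1)*(a*(g+m)/(m+1))"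
  proof (cases "k = 1")
    case False
    then have k2: "k - 1 \<ge> 1" "Suc (k-1) = k" using k by auto
    have "aa g k m = aa g (k-1) (Suc m) * (real m+1) / (g+real m)"
      using aa_Suc_k[OF g k2(1), of m] k2(2) by simp
    then have "aa g (k-1) (Suc m) = a*(g+m)/(m+1)"
      unfolding a_def using g by (simp add: field_simps)
    then show ?thesis by simp
  qed simp
  have n: "g + real m \<noteq> 0" "real m + 1 \<noteq> 0" "1 + g + real k + real m \<noteq> 0" using g by auto
  show ?thesis unfolding A B C a_def[symmetric]
    using n by (simp add: divide_simps) (simp add: algebra_simps)
qed

lemma d0_id:
  assumes k: "k \<ge> 1"
  shows "(real k - 1)*aa g (k-1) 0 - (real k + g)*aa g k 0 = - (if k = 1 then 1 else 0)"
proof (cases "k = 1")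
  case True
  then show ?thesis using g by (simp add: aa_0)
next
  case False
  then obtain j where j: "k = Suc j" "j \<ge> 1" using k by (cases k) auto
  have p: "pochhammer (g+1) j > 0" using g by (intro pochhammer_pos) auto
  have f: "(fact j :: real) = real j * fact (j - 1)" using j by (simp add: fact_reduce)
  show ?thesis using False j p g unfolding aa_0
    by (simp add: pochhammer_Suc f divide_simps)
qed

lemma aa_summable:
  assumes k: "k \<ge> 1"
  shows "summable (\<lambda>m. aa g k m * q ^ m)"
proof -
  define c where "c = (1 + q) / 2"
  show ?thesis
  proof (rule summable_ratio_test[where c=c and N="nat \<lceil>2 * real k / (1 - q)\<rceil>"])
  show "c < 1" using q1 by (simp add: c_def)
    fix n assume n: "n \<ge> nat \<lceil>2 * real k / (1 - q)\<rceil>"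
    have "real n \<ge> 2 * real k / (1 - q)" using n by linarith
    then have nk: "real n * (1 - q) \<ge> 2 * real k" using q1 by (simp add: field_simps)
    have pos: "aa g k n > 0" by (rule aa_pos[OF g k])
    have R: "(k+n)*(g+n) / ((1+g+k+n)*(n+1)) \<le> (k+n) / (n+1)"
      using g by (simp add: divide_simps) (simp add: algebra_simps mult_left_mono)
    have "q * ((k+n) / (n+1)) \<le> c"
    proof -
      have hq: "q * real k \<le> real k" using q1 q0 by (simp add: mult_left_le_one_le)
      have "q * (real k + real n) * 2 \<le> (1 + q) * (1 + real n)"
        using nk hq q0 by (simp add: algebra_simps)
      then show ?thesis unfolding c_def by (simp add: divide_simps)
    qed
    then have R2: "q * ((k+n)*(g+n) / ((1+g+k+n)*(n+1))) \<le> c"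
      using R q0 by (meson mult_left_mono order_trans)
    have "norm (aa g k (Suc n) * q ^ Suc n) = aa g k n * q^n * (q * ((k+n)*(g+n) / ((1+g+k+n)*(n+1))))"
      using pos q0 g unfolding aa_Suc_m[OF g k] by (simp add: abs_mult field_simps)
    also have "\<dots> \<le> aa g k n * q^n * c"
      using R2 pos q0 by (intro mult_left_mono) auto
    also have "\<dots> = c * norm (aa g k n * q ^ n)" using pos q0 by (simp add: abs_mult)
    finally show "norm (aa g k (Suc n) * q ^ Suc n) \<le> c * norm (aa g k n * q ^ n)" .
  qed
qed

definition TT :: "nat \<Rightarrow> real" where "TT k = (\<Sum>m. aa g k m * q ^ m)"

lemma TT_sums: "k \<ge> 1 \<Longrightarrow> (\<lambda>m. aa g k m * q ^ m) sums TT k"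
  unfolding TT_def using aa_summable by (simp add: summable_sums)

lemma TT_rec:
  assumes k: "k \<ge> 1"
  shows "q*((real k + 1)*TT (Suc k) - (real k - g)*TT k) + ((real k - 1)*TT (k-1) - (real k + g)*TT k)
         = - (if k = 1 then 1 else 0)"
proof -
  define c where "c m = (real k + 1)*aa g (Suc k) m - (real k - g)*aa g k m" for m
  define d where "d m = (real k - 1)*aa g (k-1) m - (real k + g)*aa g k m" for m
  have S1: "(\<lambda>m. c m * q^m) sums ((real k + 1)*TT (Suc k) - (real k - g)*TT k)"
    unfolding c_def left_diff_distrib mult.assoc
    by (intro sums_diff sums_mult TT_sums) (use k in auto)
  have S0: "(\<lambda>m. (real k - 1)*(aa g (k-1) m * q^m)) sums ((real k - 1)*TT (k-1))"
  proof (cases "k = 1")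
    case False then show ?thesis by (intro sums_mult TT_sums) (use k \<open>k \<noteq> 1\<close> in auto)
  qed simp
  have S2: "(\<lambda>m. d m * q^m) sums ((real k - 1)*TT (k-1) - (real k + g)*TT k)"
  proof -
    have e: "(\<lambda>m. d m * q^m) = (\<lambda>m. (real k - 1)*(aa g (k-1) m * q^m) - (real k + g)*(aa g k m * q^m))"
      by (rule ext) (simp add: d_def algebra_simps)
    show ?thesis unfolding e by (rule sums_diff[OF S0 sums_mult[OF TT_sums[OF k]]])
  qed
  have S3: "(\<lambda>m. d (Suc m) * q^(Suc m)) sums ((real k - 1)*TT (k-1) - (real k + g)*TT k - d 0)"
    using S2 by (subst sums_Suc_iff) simp
  have eq: "d (Suc m) * q^(Suc m) = - q * (c m * q^m)" for m
  proof -
    have "d (Suc m) = - c m" using coef_id[OF k, of m] unfolding c_def d_def by simp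
    then show ?thesis by simp
  qed
  have S4: "(\<lambda>m. d (Suc m) * q^(Suc m)) sums (- q * ((real k + 1)*TT (Suc k) - (real k - g)*TT k))"
    unfolding eq by (intro sums_mult S1)
  have "(real k - 1)*TT (k-1) - (real k + g)*TT k - d 0 = - q * ((real k + 1)*TT (Suc k) - (real k - g)*TT k)"
    using sums_unique2[OF S3 S4] .
  moreover have "d 0 = - (if k = 1 then 1 else 0)" unfolding d_def using d0_id[OF k] by simp
  ultimately show ?thesis by (simp add: algebra_simps)
qed

end


lemma poch_ratio: "(g::real) > 0 \<Longrightarrow> pochhammer g n / pochhammer (1+g) n = g / (g + real n)"
proof -
  assume g: "g > 0"
  have a: "pochhammer g (Suc n) = g * pochhammer (1+g) n" by (simp add: pochhammer_rec add_ac)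
  have b: "pochhammer g (Suc n) = pochhammer g n * (g + real n)" by (simp add: pochhammer_Suc)
  have p: "pochhammer (1+g) n > 0" using g by (intro pochhammer_pos) auto
  have "g + real n > 0" using g by simp
  then show ?thesis using a b p by (simp add: field_simps)
qed

definition hh :: "real \<Rightarrow> real \<Rightarrow> real" where "hh g x = (\<Sum>n. x ^ n / (g + real n))"

lemma hh_summable: assumes "(g::real) > 0" "\<bar>x\<bar> < 1" shows "summable (\<lambda>n. x ^ n / (g + real n))"
proof (rule summable_comparison_test)
  show "\<exists>N. \<forall>n\<ge>N. norm (x ^ n / (g + real n)) \<le> \<bar>x\<bar> ^ n / g"
  proof (intro exI allI impI)
    fix n :: nat
    have "\<bar>x\<bar>^n / (g + real n) \<le> \<bar>x\<bar>^n / g"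
      using assms by (intro divide_left_mono) auto
    then show "norm (x ^ n / (g + real n)) \<le> \<bar>x\<bar> ^ n / g"
      using assms by (simp add: abs_mult power_abs)
  qed
  show "summable (\<lambda>n. \<bar>x\<bar> ^ n / g)"
    using assms by (intro summable_divide summable_geometric) auto
qed

lemma hh_sums: "(g::real) > 0 \<Longrightarrow> \<bar>x\<bar> < 1 \<Longrightarrow> (\<lambda>n. x ^ n / (g + real n)) sums hh g x"
  unfolding hh_def by (intro summable_sums hh_summable)

lemma hyp_Q0: assumes "(g::real) > 0" "\<bar>x\<bar> < 1" shows "hyp2F1 1 g (1+g) x = g * hh g x"
proof -
  have t: "pochhammer 1 n * pochhammer g n / pochhammer (1+g) n * x ^ n / fact n = g * (x ^ n / (g + real n))" for n
  proof -
    have "pochhammer 1 n * pochhammer g n / pochhammer (1+g) n * x ^ n / fact n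
        = (pochhammer g n / pochhammer (1+g) n) * x ^ n * (pochhammer 1 n / fact n)" by simp
    also have "pochhammer 1 n / fact n = (1::real)" by (simp add: pochhammer_fact[symmetric])
    finally show ?thesis using poch_ratio[OF assms(1)] by simp
  qed
  have "(\<lambda>n. g * (x ^ n / (g + real n))) sums (g * hh g x)" by (intro sums_mult hh_sums assms)
  then show ?thesis unfolding hyp2F1_def hyp2F1_series_def t using assms(2) by (simp add: sums_iff)
qed

lemma hyp_Qk: assumes g: "(g::real) > 0" and q0: "q \<ge> 0" and q1: "q < 1" and k: "k \<ge> 1"
  shows "fact (k - 1) / pochhammer (g + 1) k * hyp2F1 (real k) g (1 + g + real k) q = TT g q k"
proof -
  define C where "C = fact (k - 1) / pochhammer (g + 1) k"
  have Cp: "C > 0" unfolding C_def using g by (intro divide_pos_pos pochhammer_pos) auto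
  have t: "pochhammer (real k) m * pochhammer g m / pochhammer (1 + g + real k) m * q ^ m / fact m
          = aa g k m * q ^ m / C" for m
    unfolding aa_def C_def[symmetric] using Cp by simp
  have "(\<lambda>m. aa g k m * q ^ m / C) sums (TT g q k / C)"
    by (intro sums_divide TT_sums g q0 q1 k)
  then have "hyp2F1 (real k) g (1 + g + real k) q = TT g q k / C"
    unfolding hyp2F1_def hyp2F1_series_def t using q0 q1 by (simp add: sums_iff)
  then show ?thesis using Cp unfolding C_def[symmetric] by simp
qed

lemma TT_one: assumes g: "(g::real) > 0" and q0: "q \<ge> 0" and q1: "q < 1"
  shows "q * TT g q 1 = 1 - g * (1 - q) * hh g q"
proof -
  have qa: "\<bar>q\<bar> < 1" using q0 q1 by simp
  have S: "(\<lambda>n. q ^ n / (g + real n)) sums hh g q" by (rule hh_sums[OF g qa])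
  have S1: "(\<lambda>n. q ^ Suc n / (g + real (Suc n))) sums (hh g q - 1/g)"
    using S by (subst sums_Suc_iff) simp
  have S2: "(\<lambda>n. q ^ Suc n / (g + real (Suc n)) - q * (q ^ n / (g + real n))) sums (hh g q - 1/g - q * hh g q)"
    by (intro sums_diff S1 sums_mult S)
  have e: "q ^ Suc n / (g + real (Suc n)) - q * (q ^ n / (g + real n)) = - (q * (aa g 1 n * q ^ n) / g)" for n
  proof -
    have n: "g + real n \<noteq> 0" "g + real n + 1 \<noteq> 0" using g by auto
    show ?thesis unfolding aa_one[OF g q0 q1] using n g by (simp add: divide_simps) (simp add: algebra_simps)
  qed
  have S3: "(\<lambda>n. - (q * (aa g 1 n * q ^ n) / g)) sums (- (q * TT g q 1 / g))"
    by (intro sums_minus sums_divide sums_mult TT_sums g q0 q1) auto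
  have "hh g q - 1/g - q * hh g q = - (q * TT g q 1 / g)"
    using sums_unique2[OF S2[unfolded e] S3] .
  then have "g * (hh g q - 1/g - q * hh g q) = g * (- (q * TT g q 1 / g))" by simp
  then have "g * hh g q - 1 - q * g * hh g q = - q * TT g q 1" using g by (simp add: algebra_simps)
  then show ?thesis by (simp add: algebra_simps)
qed


lemma Q_rec:
  fixes Q :: "nat \<Rightarrow> real"
  assumes g: "g > 0" and q0: "q \<ge> 0" and q1: "q < 1"
    and QQ0: "Q 0 = - th * hh g q" and QQk: "\<And>k. k \<ge> 1 \<Longrightarrow> Q k = th * TT g q k"
  shows "q*(real n+1)*Q (Suc n) - (1+q)*real n*Q n + (if n \<ge> 1 then (real n - 1)*Q (n-1) else 0)
         = th*(if n=0 then 1 else if n=1 then -1 else 0) + g*(1-q)*Q n"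
proof (cases "n = 0")
  case True
  have "q * Q 1 = th * (q * TT g q 1)" using QQk[of 1] by simp
  also have "\<dots> = th * (1 - g * (1 - q) * hh g q)" using TT_one[OF g q0 q1] by simp
  finally show ?thesis using True QQ0 by (simp add: algebra_simps)
next
  case False
  then have n: "n \<ge> 1" by simp
  have R: "q*((real n + 1)*TT g q (Suc n) - (real n - g)*TT g q n) + ((real n - 1)*TT g q (n-1) - (real n + g)*TT g q n)
         = - (if n = 1 then 1 else 0)" by (rule TT_rec[OF g q0 q1 n])
  have A: "(real n - 1)*Q (n-1) = th * ((real n - 1)*TT g q (n-1))"
  proof (cases "n = 1")
    case False then show ?thesis using QQk[of "n-1"] n by simp
  qed simp
  have "q*(real n+1)*Q (Suc n) - (1+q)*real n*Q n + (real n - 1)*Q (n-1) - g*(1-q)*Q n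
      = th * (q*((real n + 1)*TT g q (Suc n) - (real n - g)*TT g q n) + ((real n - 1)*TT g q (n-1) - (real n + g)*TT g q n))"
  proof -
    have B: "Q (Suc n) = th * TT g q (Suc n)" using QQk[of "Suc n"] by simp
    show ?thesis unfolding A QQk[OF n] B by (simp add: algebra_simps)
  qed
  also have "\<dots> = th * (- (if n = 1 then 1 else 0))" unfolding R ..
  finally show ?thesis using n False by (auto simp: algebra_simps)
qed

definition HF :: "real \<Rightarrow> complex fps" where
  "HF g = Abs_fps (\<lambda>n. complex_of_real (1 / (g + real n)))"

lemma HF_radius: assumes g: "g > 0" shows "fps_conv_radius (HF g) \<ge> 1"
  unfolding fps_conv_radius_def
proof (rule conv_radius_geI_ex')
  fix r :: real assume r: "0 < r" "ereal r < 1"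
  then have ra: "\<bar>r\<bar> < 1" by simp
  have "summable (\<lambda>n. complex_of_real (r ^ n / (g + real n)))"
    using hh_summable[OF g ra] by (rule summable_of_real)
  then show "summable (\<lambda>n. fps_nth (HF g) n * of_real r ^ n)"
    by (simp add: HF_def field_simps)
qed

lemma HF_ode: assumes g: "g > 0"
  shows "fps_X * fps_deriv (HF g) + fps_const (of_real g) * HF g = Abs_fps (\<lambda>_. 1)"
proof (rule fps_ext)
  fix n
  show "(fps_X * fps_deriv (HF g) + fps_const (of_real g) * HF g) $ n = Abs_fps (\<lambda>_. 1) $ n"
  proof (cases n)
    case 0 then show ?thesis using g by (simp add: HF_def)
  next
    case (Suc m)
    have "g + real n \<noteq> 0" using g by simp
    then have e: "real n / (g + real n) + g / (g + real n) = 1" by (simp add: divide_simps)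
    have "(fps_X * fps_deriv (HF g) + fps_const (of_real g) * HF g) $ n
        = of_real (real n * (1 / (g + real n))) + of_real g * of_real (1 / (g + real n))"
      using Suc by (simp add: HF_def)
    also have "\<dots> = of_real (real n / (g + real n) + g / (g + real n))" by simp
    also have "\<dots> = 1" unfolding e by simp
    finally show ?thesis by simp
  qed
qed

lemma HF_ode_eval: assumes g: "g > 0" and x: "norm x < 1"
  shows "x * eval_fps (fps_deriv (HF g)) x + of_real g * eval_fps (HF g) x = 1 / (1 - x)"
proof -
  have r: "ereal (norm x) < fps_conv_radius (HF g)"
    using HF_radius[OF g] x by (meson ereal_less(3) less_le_trans ereal_le_le)
  have rd: "ereal (norm x) < fps_conv_radius (fps_deriv (HF g))"
    using r fps_conv_radius_deriv[of "HF g"] by (meson less_le_trans)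
  have "x * eval_fps (fps_deriv (HF g)) x + of_real g * eval_fps (HF g) x
      = eval_fps (fps_X * fps_deriv (HF g) + fps_const (of_real g) * HF g) x"
  proof -
    have r1: "ereal (norm x) < fps_conv_radius (fps_X * fps_deriv (HF g))"
      using fps_conv_radius_mult[of fps_X "fps_deriv (HF g)"] rd by (simp add: less_le_trans)
    have r2: "ereal (norm x) < fps_conv_radius (fps_const (complex_of_real g) * HF g)"
      using fps_conv_radius_cmult_left[of "complex_of_real g" "HF g"] r g by simp
    show ?thesis using r rd by (simp add: eval_fps_add[OF r1 r2] eval_fps_mult)
  qed
  also have "\<dots> = eval_fps (Abs_fps (\<lambda>_. 1)) x" by (simp add: HF_ode[OF g])
  also have "\<dots> = 1 / (1 - x)" unfolding eval_fps_def using suminf_geometric[OF x] by simp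
  finally show ?thesis .
qed

lemma HF_real: assumes g: "g > 0" and x: "\<bar>x\<bar> < 1"
  shows "eval_fps (HF g) (complex_of_real x) = complex_of_real (hh g x)"
proof -
  have "(\<lambda>n. complex_of_real (x ^ n / (g + real n))) sums complex_of_real (hh g x)"
    using hh_sums[OF g x] by (simp only: sums_of_real_iff)
  then show ?thesis unfolding eval_fps_def HF_def by (simp add: sums_iff field_simps)
qed


definition xi :: "real \<Rightarrow> complex \<Rightarrow> complex" where
  "xi q z = (complex_of_real q - z) / (1 - z)"

definition fc :: "real \<Rightarrow> real \<Rightarrow> real \<Rightarrow> complex \<Rightarrow> complex" where
  "fc g q th z = - complex_of_real th * eval_fps (HF g) (xi q z)"

lemma norm_1_minus: "norm (z::complex) < 1/2 \<Longrightarrow> norm (1 - z) > 1/2"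
  using norm_triangle_ineq2[of 1 z] by simp

lemma xi_alt: "norm (z::complex) < 1/2 \<Longrightarrow> xi q z = complex_of_real q - complex_of_real (1 - q) * (z / (1 - z))"
proof -
  assume z: "norm z < 1/2"
  have "1 - z \<noteq> 0" using norm_1_minus[OF z] by auto
  then show ?thesis unfolding xi_def by (simp add: divide_simps) (simp add: algebra_simps)
qed

lemma xi_bound: assumes q0: "q \<ge> 0" and q1: "q < 1" and z: "norm (z::complex) < 1/2"
  shows "norm (xi q z) < 1"
proof -
  have n1: "norm (1 - z) > 1/2" by (rule norm_1_minus[OF z])
  have a: "norm (z / (1 - z)) < 1" using n1 z by (simp add: norm_divide divide_simps)
  have "norm (xi q z) \<le> norm (complex_of_real q) + norm (complex_of_real (1 - q) * (z / (1 - z)))"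
    unfolding xi_alt[OF z] by (rule norm_triangle_ineq4)
  also have "\<dots> = q + (1 - q) * norm (z / (1 - z))"
    using q0 q1 by (simp only: norm_mult norm_of_real)
  also have "\<dots> < q + (1 - q) * 1" using a q1 by (intro add_strict_left_mono mult_strict_left_mono) auto
  finally show ?thesis by simp
qed

lemma xi_deriv: assumes z: "norm (z::complex) < 1/2"
  shows "(xi q has_field_derivative (complex_of_real q - 1) / (1 - z)^2) (at z)"
proof -
  have nz: "1 - z \<noteq> 0" using norm_1_minus[OF z] by auto
  have "((\<lambda>z. (complex_of_real q - z) / (1 - z)) has_field_derivative
          ((- 1) * (1 - z) - (complex_of_real q - z) * (- 1)) / ((1 - z) * (1 - z))) (at z)"
  proof -
    have a: "((\<lambda>z. complex_of_real q - z) has_field_derivative - 1) (at z)"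
      by (auto intro!: derivative_eq_intros)
    have b: "((\<lambda>z. 1 - z) has_field_derivative - 1) (at z)"
      by (auto intro!: derivative_eq_intros)
    show ?thesis using DERIV_divide[OF a b] nz by simp
  qed
  moreover have "((- 1) * (1 - z) - (complex_of_real q - z) * (- 1)) / ((1 - z) * (1 - z))
       = (complex_of_real q - 1) / (1 - z)^2"
    by (simp add: power2_eq_square algebra_simps)
  ultimately show ?thesis unfolding xi_def[abs_def] by (simp add: power2_eq_square)
qed

context
  fixes g q th :: real
  assumes g: "g > 0" and q0: "q \<ge> 0" and q1: "q < 1"
begin

lemma fc_deriv: assumes z: "norm (z::complex) < 1/2"
  shows "(fc g q th has_field_derivative
          - complex_of_real th * (eval_fps (fps_deriv (HF g)) (xi q z) * ((complex_of_real q - 1) / (1 - z)^2))) (at z)"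
proof -
  have r: "ereal (norm (xi q z)) < fps_conv_radius (HF g)"
    using HF_radius[OF g] xi_bound[OF q0 q1 z] by (meson ereal_less(3) less_le_trans ereal_le_le)
  have "((\<lambda>z. eval_fps (HF g) (xi q z)) has_field_derivative
         eval_fps (fps_deriv (HF g)) (xi q z) * ((complex_of_real q - 1) / (1 - z)^2)) (at z)"
    by (rule DERIV_chain2[OF has_field_derivative_eval_fps[OF r] xi_deriv[OF z]])
  then show ?thesis unfolding fc_def[abs_def] by (intro DERIV_cmult)
qed

lemma fc_ode: assumes z: "norm (z::complex) < 1/2"
  shows "(complex_of_real q - z) * (1 - z) *
          (- complex_of_real th * (eval_fps (fps_deriv (HF g)) (xi q z) * ((complex_of_real q - 1) / (1 - z)^2)))
       = complex_of_real th * (1 - z) + complex_of_real (g * (1 - q)) * fc g q th z"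
proof -
  define w where "w = xi q z"
  define E where "E = eval_fps (HF g) w"
  define E' where "E' = eval_fps (fps_deriv (HF g)) w"
  have nz: "1 - z \<noteq> 0" using norm_1_minus[OF z] by auto
  have nw: "norm w < 1" unfolding w_def by (rule xi_bound[OF q0 q1 z])
  have ode: "w * E' + of_real g * E = 1 / (1 - w)"
    unfolding E_def E'_def by (rule HF_ode_eval[OF g nw])
  have w1: "1 - w = complex_of_real (1 - q) / (1 - z)"
    unfolding w_def xi_def using nz by (simp add: divide_simps)
  have u: "complex_of_real (1 - q) \<noteq> 0" using q1 by simp
  have wq: "(complex_of_real q - z) / (1 - z) = w" unfolding w_def xi_def ..
  have "(complex_of_real q - z) * (1 - z) * (- complex_of_real th * (E' * ((complex_of_real q - 1) / (1 - z)^2)))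
      = complex_of_real th * complex_of_real (1 - q) * (w * E')"
    unfolding wq[symmetric] using nz by (simp add: power2_eq_square divide_simps) (simp add: algebra_simps)
  also have "w * E' = 1 / (1 - w) - of_real g * E" using ode by (simp add: algebra_simps)
  also have "complex_of_real th * complex_of_real (1 - q) * (1 / (1 - w) - of_real g * E)
      = complex_of_real th * (1 - z) + complex_of_real (g * (1 - q)) * (- complex_of_real th * E)"
    unfolding w1 using nz u by (simp add: divide_simps) (simp add: algebra_simps)
  finally show ?thesis unfolding fc_def E_def E'_def w_def .
qed

lemma fc_holo: "fc g q th holomorphic_on ball 0 (1/2)"
  unfolding holomorphic_on_open[OF open_ball]
proof
  fix x :: complex assume "x \<in> ball 0 (1/2)"
  then have "norm x < 1/2" by simp
  then show "\<exists>f'. (fc g q th has_field_derivative f') (at x)" using fc_deriv by blast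
qed

end


lemma coeff_poly_mult:
  fixes c :: complex and D :: "complex fps"
  shows "fps_nth ((fps_const c - fps_X) * (1 - fps_X) * D) n
         = c * fps_nth D n - (1+c)*(if n=0 then 0 else fps_nth D (n-1)) + (if n<2 then 0 else fps_nth D (n-2))"
proof -
  have e: "(fps_const c - fps_X) * (1 - fps_X) * D = fps_const c * D - fps_const (1+c) * (fps_X*D) + fps_X*(fps_X*D)"
  proof -
    show ?thesis by (simp add: fps_const_add[symmetric, of 1 c] algebra_simps del: fps_const_add)
  qed
  show ?thesis unfolding e
    by (cases n; cases "n - 1") (auto simp: numeral_2_eq_2)
qed

lemma coeff_1_minus_X: "fps_nth ((1::complex fps) - fps_X) n = (if n = 0 then 1 else if n = 1 then -1 else 0)"
  by (cases n) auto

lemma hom_rec_zero: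
  fixes c :: "nat \<Rightarrow> complex" and q g :: real
  assumes g: "g > 0" and q0: "q \<ge> 0" and q1: "q < 1" and c0: "c 0 = 0"
    and rec: "\<And>n. of_real q * (of_nat n + 1) * c (Suc n) - (of_real (1+q) * of_nat n + of_real (g*(1-q))) * c n
               + (if n \<ge> 1 then (of_nat n - 1) * c (n-1) else 0) = 0"
  shows "c n = 0"
proof (cases "q = 0")
  case True
  have "c n = 0" for n
  proof (induction n)
    case 0 then show ?case by (rule c0)
  next
    case (Suc n)
    have H: "- (of_nat (Suc n) + of_real g) * c (Suc n) + of_nat n * c n = 0"
      using rec[of "Suc n"] True by (simp add: algebra_simps)
    have "(of_nat (Suc n) + of_real g) * c (Suc n) = - (- (of_nat (Suc n) + of_real g) * c (Suc n) + of_nat n * c n)"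
      using Suc.IH by (simp add: algebra_simps)
    also have "\<dots> = 0" unfolding H by simp
    finally have A: "(of_nat (Suc n) + of_real g) * c (Suc n) = 0" .
    have "real (Suc n) + g \<noteq> 0" using g by simp
    then have "complex_of_real (real (Suc n) + g) \<noteq> 0" by (metis of_real_eq_0_iff)
    then have "(of_nat (Suc n) + complex_of_real g) \<noteq> 0" by simp
    then show ?case using A by (metis mult_eq_0_iff)
  qed
  then show ?thesis .
next
  case False
  then have qp: "complex_of_real q \<noteq> 0" by simp
  have "c n = 0 \<and> c (Suc n) = 0" for n
  proof (induction n)
    case 0
    have "of_real q * c 1 = 0" using rec[of 0] c0 by simp
    then show ?case using c0 qp by simp
  next
    case (Suc n)
    have "of_real q * (of_nat (Suc n) + 1) * c (Suc (Suc n)) = 0"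
      using rec[of "Suc n"] Suc by simp
    moreover have "(of_nat (Suc n) + 1 :: complex) \<noteq> 0"
    proof -
      have "(of_nat (Suc n) + 1 :: complex) = of_nat (Suc (Suc n))" by simp
      then show ?thesis by (simp only: of_nat_eq_0_iff)
    qed
    ultimately show ?case using Suc qp by simp
  qed
  then show ?thesis by simp
qed

context
  fixes g q th :: real
  assumes g: "g > 0" and q0: "q \<ge> 0" and q1: "q < 1"
begin

definition FF :: "complex fps" where "FF = fps_expansion (fc g q th) 0"

lemma FF_exp: "fc g q th has_fps_expansion FF"
  unfolding FF_def by (rule has_fps_expansion_fps_expansion[OF open_ball _ fc_holo[OF g q0 q1]]) simp

lemma FF_eval: "norm z < 1/2 \<Longrightarrow> eval_fps FF z = fc g q th z"
  unfolding FF_def using eval_fps_expansion'[of "fc g q th" 0 "ereal (1/2)"] fc_holo[OF g q0 q1] by simp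

lemma FF_radius: "fps_conv_radius FF \<ge> ereal (1/2)"
  unfolding FF_def using conv_radius_fps_expansion[of "fc g q th" 0 "ereal (1/2)"] fc_holo[OF g q0 q1] by simp

lemma FF_ode: "(fps_const (of_real q) - fps_X) * (1 - fps_X) * fps_deriv FF
     = fps_const (of_real th) * (1 - fps_X) + fps_const (of_real (g*(1-q))) * FF"
proof -
  have E1: "(\<lambda>z. (of_real q - z) * (1 - z) * deriv (fc g q th) z) has_fps_expansion
              (fps_const (of_real q) - fps_X) * (1 - fps_X) * fps_deriv FF"
    by (intro has_fps_expansion_mult has_fps_expansion_diff has_fps_expansion_const has_fps_expansion_fps_X
          has_fps_expansion_1 has_fps_expansion_deriv FF_exp)
  have E2: "(\<lambda>z. of_real th * (1 - z) + of_real (g*(1-q)) * fc g q th z) has_fps_expansion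
              fps_const (of_real th) * (1 - fps_X) + fps_const (of_real (g*(1-q))) * FF"
    by (intro has_fps_expansion_add has_fps_expansion_cmult_left has_fps_expansion_diff has_fps_expansion_fps_X
          has_fps_expansion_1 FF_exp)
  have ev: "eventually (\<lambda>z. (of_real q - z) * (1 - z) * deriv (fc g q th) z
            = of_real th * (1 - z) + of_real (g*(1-q)) * fc g q th z) (nhds 0)"
  proof -
    have "eventually (\<lambda>z. z \<in> ball (0::complex) (1/2)) (nhds 0)"
      by (intro eventually_nhds_in_open) auto
    then show ?thesis
    proof eventually_elim
      case (elim z)
      then have z: "norm z < 1/2" by simp
      show ?case using DERIV_imp_deriv[OF fc_deriv[OF g q0 q1 z]] fc_ode[OF g q0 q1 z] by simp
    qed
  qed
  have "(\<lambda>z. of_real th * (1 - z) + of_real (g*(1-q)) * fc g q th z) has_fps_expansion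
              (fps_const (of_real q) - fps_X) * (1 - fps_X) * fps_deriv FF"
    using has_fps_expansion_cong[OF ev refl] E1 by simp
  then show ?thesis using fps_expansion_unique_complex E2 by blast
qed

lemma FF_rec:
  "of_real q * (of_nat n + 1) * fps_nth FF (Suc n) - of_real (1+q) * of_nat n * fps_nth FF n
     + (if n \<ge> 1 then (of_nat n - 1) * fps_nth FF (n-1) else 0)
   = of_real th * (if n=0 then 1 else if n=1 then -1 else 0) + of_real (g*(1-q)) * fps_nth FF n"
proof -
  have "fps_nth ((fps_const (of_real q) - fps_X) * (1 - fps_X) * fps_deriv FF) n
     = fps_nth (fps_const (of_real th) * (1 - fps_X) + fps_const (of_real (g*(1-q))) * FF) n"
    by (simp only: FF_ode)
  then have h: "of_real q * fps_nth (fps_deriv FF) n - (1 + of_real q)*(if n=0 then 0 else fps_nth (fps_deriv FF) (n-1))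
         + (if n<2 then 0 else fps_nth (fps_deriv FF) (n-2))
       = of_real th * (if n = 0 then 1 else if n = 1 then -1 else 0) + of_real (g*(1-q)) * fps_nth FF n"
    unfolding coeff_poly_mult by (simp add: coeff_1_minus_X)
  show ?thesis
  proof (cases n)
    case 0 then show ?thesis using h by (simp add: algebra_simps)
  next
    case (Suc m)
    show ?thesis
    proof (cases m)
      case 0 then show ?thesis using h Suc by (simp add: algebra_simps)
    next
      case (Suc j)
      then show ?thesis using h \<open>n = Suc m\<close> by (simp add: algebra_simps)
    qed
  qed
qed

end


context
  fixes g q th :: real and Q :: "nat \<Rightarrow> real"
  assumes g: "g > 0" and q0: "q \<ge> 0" and q1: "q < 1"
    and QQ0: "Q 0 = - th * hh g q" and QQk: "\<And>k. k \<ge> 1 \<Longrightarrow> Q k = th * TT g q k"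
begin

lemma xi_real: "xi q (complex_of_real x) = complex_of_real ((q - x) / (1 - x))"
  unfolding xi_def by simp

lemma FF_coeff: "fps_nth (FF g q th) n = complex_of_real (Q n)"
proof -
  define c where "c n = fps_nth (FF g q th) n - complex_of_real (Q n)" for n
  have qa: "\<bar>q\<bar> < 1" using q0 q1 by simp
  have "fps_nth (FF g q th) 0 = eval_fps (FF g q th) 0" by (simp add: eval_fps_at_0)
  also have "\<dots> = fc g q th 0" by (rule FF_eval[OF g q0 q1]) simp
  also have "\<dots> = complex_of_real (Q 0)"
    unfolding fc_def QQ0 using xi_real[of 0] HF_real[OF g qa] by simp
  finally have c0: "c 0 = 0" unfolding c_def by simp
  have rec: "of_real q * (of_nat n + 1) * c (Suc n) - (of_real (1+q) * of_nat n + of_real (g*(1-q))) * c n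
               + (if n \<ge> 1 then (of_nat n - 1) * c (n-1) else 0) = 0" for n
  proof -
    have A: "of_real q * (of_nat n + 1) * fps_nth (FF g q th) (Suc n) - of_real (1+q) * of_nat n * fps_nth (FF g q th) n
     + (if n \<ge> 1 then (of_nat n - 1) * fps_nth (FF g q th) (n-1) else 0)
      = of_real th * (if n=0 then 1 else if n=1 then -1 else 0) + of_real (g*(1-q)) * fps_nth (FF g q th) n"
      by (rule FF_rec[OF g q0 q1])
    have B0: "q*(real n+1)*Q (Suc n) - (1+q)*real n*Q n + (if n \<ge> 1 then (real n - 1)*Q (n-1) else 0)
         = th*(if n=0 then 1 else if n=1 then -1 else 0) + g*(1-q)*Q n"
      by (rule Q_rec[OF g q0 q1 QQ0 QQk])
    have B: "of_real q * (of_nat n + 1) * complex_of_real (Q (Suc n)) - of_real (1+q) * of_nat n * complex_of_real (Q n)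
     + (if n \<ge> 1 then (of_nat n - 1) * complex_of_real (Q (n-1)) else 0)
      = of_real th * (if n=0 then 1 else if n=1 then -1 else 0) + of_real (g*(1-q)) * complex_of_real (Q n)"
    proof -
      have "complex_of_real (q*(real n+1)*Q (Suc n) - (1+q)*real n*Q n + (if n \<ge> 1 then (real n - 1)*Q (n-1) else 0))
         = complex_of_real (th*(if n=0 then 1 else if n=1 then -1 else 0) + g*(1-q)*Q n)"
        using B0 by simp
      then show ?thesis by (cases "n \<ge> 1") (auto simp: of_real_mult of_real_add of_real_diff)
    qed
    show ?thesis
    proof (cases "n \<ge> 1")
      case True
      then show ?thesis using A B unfolding c_def by (simp add: algebra_simps)
    next
      case False
      then show ?thesis using A B unfolding c_def by (simp add: algebra_simps)
    qed
  qed
  have "c n = 0" by (rule hom_rec_zero[OF g q0 q1 c0 rec])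
  then show ?thesis unfolding c_def by simp
qed

lemma Q_sums_fc:
  assumes x: "\<bar>x\<bar> < 1/2"
  shows "(\<lambda>k. Q k * x ^ k) sums Re (fc g q th (complex_of_real x))"
    and "fc g q th (complex_of_real x) = complex_of_real (Re (fc g q th (complex_of_real x)))"
proof -
  have r: "ereal (norm (complex_of_real x)) < fps_conv_radius (FF g q th)"
  proof -
    have "ereal (norm (complex_of_real x)) < ereal (1/2)" using x by simp
    then show ?thesis using FF_radius[OF g q0 q1, of th] by (rule less_le_trans)
  qed
  have S: "(\<lambda>n. complex_of_real (Q n * x ^ n)) sums fc g q th (complex_of_real x)"
    using sums_eval_fps[OF r] FF_eval[OF g q0 q1, of "complex_of_real x" th] x by (simp add: FF_coeff)
  show S1: "(\<lambda>k. Q k * x ^ k) sums Re (fc g q th (complex_of_real x))"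
    using sums_Re[OF S] by simp
  have "(\<lambda>n. complex_of_real (Q n * x ^ n)) sums complex_of_real (Re (fc g q th (complex_of_real x)))"
    using S1 by (simp only: sums_of_real_iff)
  then show "fc g q th (complex_of_real x) = complex_of_real (Re (fc g q th (complex_of_real x)))"
    using S sums_unique2 by blast
qed

lemma fc_real:
  assumes x0: "0 \<le> x" and x: "x < 1/2"
  shows "\<bar>(q - x) / (1 - x)\<bar> < 1"
    and "fc g q th (complex_of_real x) = complex_of_real (- th * hh g ((q - x) / (1 - x)))"
proof -
  have h: "norm (xi q (complex_of_real x)) < 1" by (rule xi_bound[OF q0 q1]) (use x0 x in auto)
  then show a: "\<bar>(q - x) / (1 - x)\<bar> < 1" unfolding xi_real norm_of_real .
  show "fc g q th (complex_of_real x) = complex_of_real (- th * hh g ((q - x) / (1 - x)))"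
    unfolding fc_def xi_real HF_real[OF g a] by simp
qed

end


subsection \<open>The generating function of V\<close>

lemma E_sums:
  fixes V :: "nat pmf" and x :: real
  assumes x: "\<bar>x\<bar> \<le> 1"
  shows "(\<lambda>n. pmf V n * x ^ n) sums measure_pmf.expectation V (\<lambda>n. x ^ n)"
proof -
  have int: "integrable (measure_pmf V) (\<lambda>n. x ^ n)"
    by (intro measure_pmf.integrable_const_bound[where B=1]) (auto simp: power_abs x power_le_one)
  have int2: "integrable (count_space UNIV) (\<lambda>n. pmf V n * x ^ n)"
    using int unfolding measure_pmf_eq_density by (subst (asm) integrable_density) auto
  have "measure_pmf.expectation V (\<lambda>n. x ^ n) = (\<integral>n. pmf V n * x ^ n \<partial>count_space UNIV)"
    unfolding measure_pmf_eq_density by (subst integral_density) auto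
  then show ?thesis using sums_integral_count_space_nat[OF int2] by simp
qed

definition PF :: "nat pmf \<Rightarrow> complex fps" where
  "PF V = Abs_fps (\<lambda>n. complex_of_real (pmf V n))"

lemma PF_real: assumes "\<bar>x\<bar> \<le> 1"
  shows "eval_fps (PF V) (complex_of_real x) = complex_of_real (measure_pmf.expectation V (\<lambda>n. x ^ n))"
proof -
  have "(\<lambda>n. complex_of_real (pmf V n * x ^ n)) sums complex_of_real (measure_pmf.expectation V (\<lambda>n. x ^ n))"
    using E_sums[OF assms, of V] by (simp only: sums_of_real_iff)
  then show ?thesis unfolding eval_fps_def PF_def by (simp add: sums_iff)
qed

lemma PF_radius: "fps_conv_radius (PF V) \<ge> 1"
  unfolding fps_conv_radius_def
proof (rule conv_radius_geI_ex')
  fix r :: real assume r: "0 < r" "ereal r < 1"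
  then have ra: "\<bar>r\<bar> \<le> 1" by simp
  have "summable (\<lambda>n. complex_of_real (pmf V n * r ^ n))"
    using E_sums[OF ra, of V] by (intro summable_of_real) (auto simp: sums_iff)
  then show "summable (\<lambda>n. fps_nth (PF V) n * of_real r ^ n)"
    by (simp add: PF_def)
qed

lemma E_pos: assumes "0 < (x::real)" "x \<le> 1" shows "measure_pmf.expectation V (\<lambda>n. x ^ n) > 0"
proof -
  obtain i where i: "i \<in> set_pmf V" using set_pmf_not_empty[of V] by blast
  then have "pmf V i > 0" using set_pmf_iff pmf_nonneg by (metis less_eq_real_def)
  have S: "(\<lambda>n. pmf V n * x ^ n) sums measure_pmf.expectation V (\<lambda>n. x ^ n)"
    using E_sums assms by simp
  have "0 < (\<Sum>n. pmf V n * x ^ n)"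
    by (rule suminf_pos2[where i=i]) (use S \<open>pmf V i > 0\<close> assms in \<open>auto simp: sums_iff\<close>)
  then show ?thesis using S by (simp add: sums_iff)
qed


theorem mainTheorem10:
  fixes \<delta> \<alpha> \<beta> \<theta> lam q \<gamma> :: real
    and V :: "nat pmf"
    and Q :: "nat \<Rightarrow> real"
  assumes "\<delta> > 0" and "\<alpha> > \<beta>" and "\<beta> \<ge> 0" and "\<theta> > 0"
    and "lam = \<alpha> - \<beta>" and "q = \<beta> / \<alpha>" and "\<gamma> = \<delta> / lam"
    and pgf: "\<forall>z\<in>{0..<1}. ln (measure_pmf.expectation V (\<lambda>n. z ^ n)) =
               - (\<theta> / \<gamma>) * hyp2F1 1 \<gamma> (1 + \<gamma>) ((q - z) / (1 - z))"
    and Q0: "Q 0 = - (\<theta> / \<gamma>) * hyp2F1 1 \<gamma> (1 + \<gamma>) q"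
    and Qk: "\<forall>k\<ge>1. Q k = \<theta> * fact (k - 1) / pochhammer (\<gamma> + 1) k
                          * hyp2F1 (real k) \<gamma> (1 + \<gamma> + real k) q"
  shows "(\<exists>r>0. \<forall>z. \<bar>z\<bar> < r \<longrightarrow>
            (\<lambda>k. Q k * z ^ k) sums ln (measure_pmf.expectation V (\<lambda>n. z ^ n)))
       \<and> pmf V 0 = exp (Q 0)
       \<and> (\<forall>n\<ge>1. pmf V n = (1 / real n) * (\<Sum>k<n. real (n - k) * Q (n - k) * pmf V k))"
proof -
  have g: "\<gamma> > 0" using assms(1,2,5,7) by simp
  have ap: "\<alpha> > 0" using assms(2,3) by simp
  have q0: "q \<ge> 0" using assms(3,6) ap by simp
  have q1: "q < 1" unfolding assms(6) using assms(2) ap by (simp add: divide_less_eq)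
  have qa: "\<bar>q\<bar> < 1" using q0 q1 by simp
  have QQ0: "Q 0 = - \<theta> * hh \<gamma> q" unfolding Q0 hyp_Q0[OF g qa] using g by simp
  have QQk: "Q k = \<theta> * TT \<gamma> q k" if k: "k \<ge> 1" for k
  proof -
    have "Q k = \<theta> * (fact (k - 1) / pochhammer (\<gamma> + 1) k * hyp2F1 (real k) \<gamma> (1 + \<gamma> + real k) q)"
      using Qk k by simp
    then show ?thesis unfolding hyp_Qk[OF g q0 q1 k] .
  qed
  define f where "f = fc \<gamma> q \<theta>"
  define G where "G = eval_fps (PF V)"
  define E where "E x = measure_pmf.expectation V (\<lambda>n. x ^ n)" for x :: real
  have s1: "ball (0::complex) (1/2) \<subseteq> eball 0 (ereal 1)" by auto
  have s2: "eball (0::complex) (ereal 1) \<subseteq> eball 0 (fps_conv_radius (PF V))"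
    by (rule eball_mono) (use PF_radius[of V] in \<open>simp add: one_ereal_def\<close>)
  have sub: "ball (0::complex) (1/2) \<subseteq> eball 0 (fps_conv_radius (PF V))" using s1 s2 by blast
  have Gholo: "G holomorphic_on ball 0 (1/2)"
    unfolding G_def by (rule holomorphic_on_eval_fps[OF sub])
  have fholo: "f holomorphic_on ball 0 (1/2)" unfolding f_def by (rule fc_holo[OF g q0 q1])
  have onU: "G (complex_of_real x) = exp (f (complex_of_real x))" if x: "0 < x" "x < 1/2" for x
  proof -
    have a: "\<bar>(q - x) / (1 - x)\<bar> < 1" and fr: "f (complex_of_real x) = complex_of_real (- \<theta> * hh \<gamma> ((q - x) / (1 - x)))"
      using fc_real[OF g q0 q1 QQ0 QQk, of x] x unfolding f_def by auto
    have "ln (E x) = - (\<theta> / \<gamma>) * hyp2F1 1 \<gamma> (1 + \<gamma>) ((q - x) / (1 - x))"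
      using pgf x unfolding E_def by simp
    also have "\<dots> = - \<theta> * hh \<gamma> ((q - x) / (1 - x))" unfolding hyp_Q0[OF g a] using g by simp
    finally have l: "ln (E x) = - \<theta> * hh \<gamma> ((q - x) / (1 - x))" .
    have Ep: "E x > 0" unfolding E_def using E_pos[of x V] x by simp
    have "G (complex_of_real x) = complex_of_real (E x)"
      unfolding G_def E_def using PF_real[of x V] x by simp
    also have "E x = exp (- \<theta> * hh \<gamma> ((q - x) / (1 - x)))" using l Ep by (metis exp_ln)
    finally have "G (complex_of_real x) = complex_of_real (exp (- \<theta> * hh \<gamma> ((q - x) / (1 - x))))" .
    then show ?thesis unfolding fr exp_of_real .
  qed
  have key: "G z = exp (f z)" if z: "z \<in> ball 0 (1/2)" for z
  proof -
    have "G z - exp (f z) = 0"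
    proof (rule analytic_continuation[of "\<lambda>z. G z - exp (f z)" "ball 0 (1/2)" "complex_of_real ` {0<..<1/2}" 0])
      show "(\<lambda>z. G z - exp (f z)) holomorphic_on ball 0 (1/2)"
        using Gholo fholo by (intro holomorphic_intros) auto
      show "complex_of_real ` {0<..<1/2} \<subseteq> ball 0 (1/2)" by auto
      show "0 islimpt complex_of_real ` {0<..<1/2}"
        unfolding islimpt_approachable
      proof (intro allI impI)
        fix e :: real assume e: "e > 0"
        define y where "y = min e (1/2) / 2"
        have y: "0 < y" "y < 1/2" "y < e" using e unfolding y_def by auto
        show "\<exists>x'\<in>complex_of_real ` {0<..<1/2}. x' \<noteq> 0 \<and> dist x' 0 < e"
          by (rule bexI[of _ "complex_of_real y"]) (use y in auto)
      qed
      show "\<And>z. z \<in> complex_of_real ` {0<..<1/2} \<Longrightarrow> G z - exp (f z) = 0"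
        using onU by auto
    qed (use z in auto)
    then show ?thesis by simp
  qed
  have realpart: "(\<lambda>k. Q k * x ^ k) sums ln (E x) \<and> E x = exp (Re (f (complex_of_real x)))"
    if x: "\<bar>x\<bar> < 1/2" for x
  proof -
    have S: "(\<lambda>k. Q k * x ^ k) sums Re (f (complex_of_real x))"
      and fr: "f (complex_of_real x) = complex_of_real (Re (f (complex_of_real x)))"
      using Q_sums_fc[OF g q0 q1 QQ0 QQk x] unfolding f_def by auto
    have "complex_of_real (E x) = G (complex_of_real x)"
      unfolding G_def E_def using PF_real[of x V] x by simp
    also have "\<dots> = exp (f (complex_of_real x))" using key x by simp
    also have "\<dots> = complex_of_real (exp (Re (f (complex_of_real x))))"
      by (subst fr) (simp add: exp_of_real)
    finally have Ex: "E x = exp (Re (f (complex_of_real x)))" by (simp only: of_real_eq_iff)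
    show ?thesis using S Ex by simp
  qed
  have C1: "\<exists>r>0. \<forall>z. \<bar>z\<bar> < r \<longrightarrow> (\<lambda>k. Q k * z ^ k) sums ln (measure_pmf.expectation V (\<lambda>n. z ^ n))"
  proof (intro exI[of _ "1/2"] conjI allI impI)
    show "(1/2::real) > 0" by simp
    fix z :: real assume "\<bar>z\<bar> < 1/2"
    then show "(\<lambda>k. Q k * z ^ k) sums ln (measure_pmf.expectation V (\<lambda>n. z ^ n))"
      using realpart[of z] unfolding E_def by blast
  qed
  have C2: "pmf V 0 = exp (Q 0)"
  proof -
    have a: "(\<lambda>k. Q k * 0 ^ k) sums Re (f 0)" and b: "E 0 = exp (Re (f 0))"
      using realpart[of 0] by (auto simp: sums_iff)
    have "Re (f 0) = Q 0" using a powser_sums_zero[of Q] sums_unique2 by blast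
    moreover have "E 0 = pmf V 0"
      using E_sums[of 0 V] powser_sums_zero[of "pmf V"] sums_unique2 unfolding E_def by fastforce
    ultimately show ?thesis using b by simp
  qed
  have fd: "(f has_field_derivative deriv f z) (at z)" if z: "norm z < 1/2" for z
  proof -
    have "(f has_field_derivative - complex_of_real \<theta> * (eval_fps (fps_deriv (HF \<gamma>)) (xi q z) * ((complex_of_real q - 1) / (1 - z)^2))) (at z)"
      unfolding f_def by (rule fc_deriv[OF g q0 q1 z])
    then show ?thesis using DERIV_imp_deriv by metis
  qed
  have PFexp: "G has_fps_expansion PF V"
  proof -
    have "fps_conv_radius (PF V) > 0" using PF_radius[of V] by (metis less_le_trans one_ereal_def zero_less_one ereal_less(2) zero_ereal_def)
    then show ?thesis unfolding G_def by (rule eval_fps_has_fps_expansion)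
  qed
  have D1: "deriv G has_fps_expansion fps_deriv (PF V)" by (rule has_fps_expansion_deriv[OF PFexp])
  have D2: "(\<lambda>z. deriv f z * G z) has_fps_expansion fps_deriv (FF \<gamma> q \<theta>) * PF V"
    unfolding f_def by (intro has_fps_expansion_mult has_fps_expansion_deriv FF_exp[OF g q0 q1] PFexp[unfolded f_def])
  have ev: "eventually (\<lambda>z. deriv G z = deriv f z * G z) (nhds 0)"
  proof -
    have "eventually (\<lambda>z. z \<in> ball (0::complex) (1/2)) (nhds 0)"
      by (intro eventually_nhds_in_open) auto
    then show ?thesis
    proof eventually_elim
      case (elim z)
      then have z: "norm z < 1/2" by simp
      have "eventually (\<lambda>w. w \<in> ball (0::complex) (1/2)) (nhds z)"
        using elim by (intro eventually_nhds_in_open) auto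
      then have "eventually (\<lambda>w. G w = exp (f w)) (nhds z)"
        by eventually_elim (use key in auto)
      then have "deriv G z = deriv (\<lambda>w. exp (f w)) z" by (intro deriv_cong_ev) auto
      also have "((\<lambda>w. exp (f w)) has_field_derivative exp (f z) * deriv f z) (at z)"
        by (rule DERIV_chain2[OF DERIV_exp fd[OF z]])
      then have "deriv (\<lambda>w. exp (f w)) z = exp (f z) * deriv f z" by (rule DERIV_imp_deriv)
      also have "\<dots> = deriv f z * G z" using key[of z] elim by simp
      finally show ?case .
    qed
  qed
  have Feq: "fps_deriv (PF V) = fps_deriv (FF \<gamma> q \<theta>) * PF V"
  proof -
    have "deriv G has_fps_expansion fps_deriv (FF \<gamma> q \<theta>) * PF V"
      using has_fps_expansion_cong[OF ev refl] D2 by simp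
    then show ?thesis using fps_expansion_unique_complex D1 by blast
  qed
  have C3: "pmf V n = (1 / real n) * (\<Sum>k<n. real (n - k) * Q (n - k) * pmf V k)" if n: "n \<ge> 1" for n
  proof -
    obtain m where m: "n = Suc m" using n by (cases n) auto
    have "fps_nth (fps_deriv (PF V)) m = fps_nth (fps_deriv (FF \<gamma> q \<theta>) * PF V) m" by (simp only: Feq)
    then have "complex_of_real (real (Suc m) * pmf V (Suc m))
       = (\<Sum>i=0..m. (of_nat (Suc i) * complex_of_real (Q (Suc i))) * complex_of_real (pmf V (m - i)))"
      by (simp add: fps_mult_nth PF_def FF_coeff[OF g q0 q1 QQ0 QQk] add.commute)
    also have "\<dots> = complex_of_real (\<Sum>i=0..m. real (Suc i) * Q (Suc i) * pmf V (m - i))"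
      by simp
    finally have R: "real (Suc m) * pmf V (Suc m) = (\<Sum>i=0..m. real (Suc i) * Q (Suc i) * pmf V (m - i))"
      by (simp only: of_real_eq_iff)
    have "(\<Sum>k<n. real (n - k) * Q (n - k) * pmf V k) = (\<Sum>i<n. real (n - (n - Suc i)) * Q (n - (n - Suc i)) * pmf V (n - Suc i))"
      by (rule sum.nat_diff_reindex[symmetric])
    also have "\<dots> = (\<Sum>i<Suc m. real (Suc i) * Q (Suc i) * pmf V (m - i))"
      unfolding m by (intro sum.cong refl) auto
    also have "\<dots> = (\<Sum>i=0..m. real (Suc i) * Q (Suc i) * pmf V (m - i))"
      by (simp add: atLeast0AtMost lessThan_Suc_atMost)
    finally have "(\<Sum>k<n. real (n - k) * Q (n - k) * pmf V k) = real n * pmf V n" using R m by simp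
    then show ?thesis using n by simp
  qed
  show ?thesis using C1 C2 C3 by blast
qed

end
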